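(* Let $L,M\geq 1$, let $\{u\}_L=\{u_1,\ldots,u_L\}$ and $\{w\}_M=\{w_1,\ldots,w_M\}$ be complex variables, and write $\bar u_l=u_l+\gamma$, $\{\bar u\}_L=\{\bar u_1,\ldots,\bar u_L\}$. To each $u_l$ associate an auxiliary space $V_{a_l}\cong\mathbb{C}^2$ and to each $w_m$ a quantum space $V_m\cong\mathbb{C}^2$. Define $$T\big(\{u\}_L,\{w\}_M\big)=T_{a_L}(u_L,\{w\}_M)\cdots T_{a_1}(u_1,\{w\}_M),$$ an operator on $V_{a_1}\otimes\cdots\otimes V_{a_L}\otimes V_1\otimes\cdots\otimes V_M$. For each $1\le m\le M$ let $T_m(w_m,\{\bar u\}_L)=R_{m a_1}(w_m,\bar u_1)\cdots R_{m a_L}(w_m,\bar u_L)$, regarded as a $2\times 2$ matrix in $V_m$ with entries $A(w_m,\{\bar u\}_L),B(w_m,\{\bar u\}_L),C(w_m,\{\bar u\}_L),D(w_m,\{\bar u\}_L)$ acting on $V_{a_1}\otimes\cdots\otimes V_{a_L}$, and set $$\overline{T}_m(w_m,\{\bar u\}_L)=\begin{pmatrix} D(w_m,\{\bar u\}_L) & -B(w_m,\{\bar u\}_L)\\ -C(w_m,\{\bar u\}_L) & A(w_m,\{\bar u\}_L)\end{pmatrix}_m .$$ Then $$T\big(\{u\}_L,\{w\}_M\big)=(-1)^{LM}\,\overline{T}_1(w_1,\{\bar u\}_L)\cdots \overline{T}_M(w_M,\{\bar u\}_L).$$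
   Context: Notation: $[x]=\sinh x$, and $\gamma$ is a fixed complex parameter. Each space $V_a\cong\mathbb{C}^2$ has basis $\uparrow=(1,0)^{T}$, $\downarrow=(0,1)^{T}$. For two such spaces $V_a,V_b$, the $R$-matrix $R_{ab}(u,v)\in\mathrm{End}(V_a\otimes V_b)$ is, in the ordered basis $(\uparrow\otimes\uparrow,\uparrow\otimes\downarrow,\downarrow\otimes\uparrow,\downarrow\otimes\downarrow)$ (first factor $V_a$), $$R_{ab}(u,v)=\begin{pmatrix}[u-v+\gamma]&0&0&0\\0&[u-v]&[\gamma]&0\\0&[\gamma]&[u-v]&0\\0&0&0&[u-v+\gamma]\end{pmatrix},$$ acting as the identity on all other tensor factors. For an auxiliary space $V_a$ and quantum spaces $V_1,\dots,V_M$, the monodromy matrix is $T_a(u,\{w\}_M)=R_{a1}(u,w_1)\cdots R_{aM}(u,w_M)$; writing it as a $2\times2$ matrix in $V_a$ (rows/columns indexed by $\uparrow,\downarrow$), $T_a(u,\{w\}_M)=\begin{pmatrix}A(u,\{w\}_M)&B(u,\{w\}_M)\\C(u,\{w\}_M)&D(u,\{w\}_M)\end{pmatrix}_a$ with entries acting on $V_1\otimes\cdots\otimes V_M$. The same convention defines $A,B,C,D$ for a monodromy matrix whose auxiliary space is a quantum space $V_m$ and whose "sites" are the spaces $V_{a_1},\dots,V_{a_L}$. *)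

theory Defs
  imports Complex_Main
begin

text \<open>Model of the tensor product of N copies of C^2, sites 0..N-1.
  A basis configuration is a map nat => bool that is False at every site >= N
  (True = up, False = down). An operator is given by its matrix elements
  op s t = <s| op |t>.\<close>

type_synonym cfg = "nat \<Rightarrow> bool"
type_synonym op = "cfg \<Rightarrow> cfg \<Rightarrow> complex"

definition configs :: "nat \<Rightarrow> cfg set" where
  "configs N = {c. \<forall>i\<ge>N. c i = False}"

definition op_id :: op where
  "op_id s t = (if s = t then 1 else 0)"

definition op_mult :: "nat \<Rightarrow> op \<Rightarrow> op \<Rightarrow> op" where
  "op_mult N X Y s t = (\<Sum>r\<in>configs N. X s r * Y r t)"

definition op_scale :: "complex \<Rightarrow> op \<Rightarrow> op" where
  "op_scale c X s t = c * X s t"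

definition op_prod :: "nat \<Rightarrow> op list \<Rightarrow> op" where
  "op_prod N Xs = foldr (op_mult N) Xs op_id"

definition sh :: "complex \<Rightarrow> complex" where
  "sh x = sinh x"

text \<open>4x4 R-matrix entry <a b| R(u,v) |c d>, first factor = site i\<close>
definition Rmat :: "complex \<Rightarrow> complex \<Rightarrow> complex \<Rightarrow> bool \<Rightarrow> bool \<Rightarrow> bool \<Rightarrow> bool \<Rightarrow> complex" where
  "Rmat \<gamma> u v a b c d =
     (if a = c \<and> b = d then (if a = b then sh (u - v + \<gamma>) else sh (u - v))
      else if a \<noteq> b \<and> c = b \<and> d = a then sh \<gamma>
      else 0)"

text \<open>R_{ij}(u,v) acting on sites i,j (i first factor) and as identity elsewhere\<close>
definition Rop :: "complex \<Rightarrow> nat \<Rightarrow> nat \<Rightarrow> complex \<Rightarrow> complex \<Rightarrow> op" where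
  "Rop \<gamma> i j u v s t =
     (if \<forall>k. k \<noteq> i \<and> k \<noteq> j \<longrightarrow> s k = t k
      then Rmat \<gamma> u v (s i) (s j) (t i) (t j) else 0)"

text \<open>entry (s,t) of an operator viewed as a 2x2 matrix in the space at site m;
  the result acts on the remaining sites (site m is set to down)\<close>
definition entry :: "nat \<Rightarrow> op \<Rightarrow> bool \<Rightarrow> bool \<Rightarrow> op" where
  "entry m X a b s t = X (s(m := a)) (t(m := b))"

text \<open>assemble an operator from a 2x2 matrix of operators on the other sites\<close>
definition block :: "nat \<Rightarrow> (bool \<Rightarrow> bool \<Rightarrow> op) \<Rightarrow> op" where
  "block m X s t = X (s m) (t m) (s(m := False)) (t(m := False))"

text \<open>Layout: auxiliary space a_l (l = 1..L) is site l-1, quantum space V_m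
  (m = 1..M) is site L+m-1; parameters are 0-indexed: u 0..L-1, w 0..M-1.\<close>

text \<open>T_{a_l}(u_l,{w}_M) = R_{a_l 1}(u_l,w_1) ... R_{a_l M}(u_l,w_M)\<close>
definition monoA :: "complex \<Rightarrow> nat \<Rightarrow> nat \<Rightarrow> (nat \<Rightarrow> complex) \<Rightarrow> (nat \<Rightarrow> complex) \<Rightarrow> nat \<Rightarrow> op" where
  "monoA \<gamma> L M u w l = op_prod (L + M) (map (\<lambda>m. Rop \<gamma> l (L + m) (u l) (w m)) [0..<M])"

text \<open>T({u}_L,{w}_M) = T_{a_L} ... T_{a_1}\<close>
definition bigT :: "complex \<Rightarrow> nat \<Rightarrow> nat \<Rightarrow> (nat \<Rightarrow> complex) \<Rightarrow> (nat \<Rightarrow> complex) \<Rightarrow> op" where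
  "bigT \<gamma> L M u w = op_prod (L + M) (rev (map (monoA \<gamma> L M u w) [0..<L]))"

text \<open>T_m(w_m,{ubar}_L) = R_{m a_1}(w_m,ubar_1) ... R_{m a_L}(w_m,ubar_L), ubar_l = u_l + gamma\<close>
definition monoQ :: "complex \<Rightarrow> nat \<Rightarrow> nat \<Rightarrow> (nat \<Rightarrow> complex) \<Rightarrow> (nat \<Rightarrow> complex) \<Rightarrow> nat \<Rightarrow> op" where
  "monoQ \<gamma> L M u w m = op_prod (L + M) (map (\<lambda>l. Rop \<gamma> (L + m) l (w m) (u l + \<gamma>)) [0..<L])"

definition monoQbar :: "complex \<Rightarrow> nat \<Rightarrow> nat \<Rightarrow> (nat \<Rightarrow> complex) \<Rightarrow> (nat \<Rightarrow> complex) \<Rightarrow> nat \<Rightarrow> op" where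
  "monoQbar \<gamma> L M u w m =
     (let X = monoQ \<gamma> L M u w m; q = L + m;
          A = entry q X True True; B = entry q X True False;
          C = entry q X False True; D = entry q X False False
      in block q (\<lambda>a b. if a \<and> b then D
                        else if a \<and> \<not> b then op_scale (-1) B
                        else if \<not> a \<and> b then op_scale (-1) C
                        else A))"

end

theory Submission
  imports Defs
begin


definition eqv :: "nat \<Rightarrow> op \<Rightarrow> op \<Rightarrow> bool" where
  "eqv N X Y \<longleftrightarrow> (\<forall>s\<in>configs N. \<forall>t\<in>configs N. X s t = Y s t)"

lemma eqv_refl[simp]: "eqv N X X" by (simp add: eqv_def)
lemma eqv_sym: "eqv N X Y \<Longrightarrow> eqv N Y X" by (simp add: eqv_def)
lemma eqv_trans: "eqv N X Y \<Longrightarrow> eqv N Y Z \<Longrightarrow> eqv N X Z" by (simp add: eqv_def)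

lemma finite_configs: "finite (configs N)"
proof -
  have "configs N \<subseteq> (\<lambda>A k. k \<in> A) ` Pow {..<N}"
  proof
    fix c assume c: "c \<in> configs N"
    hence "{k. c k} \<in> Pow {..<N}" by (auto simp: configs_def) (meson not_le)
    moreover have "c = (\<lambda>k. k \<in> {k. c k})" by auto
    ultimately show "c \<in> (\<lambda>A k. k \<in> A) ` Pow {..<N}" by blast
  qed
  thus ?thesis by (rule finite_subset) auto
qed

lemma op_mult_assoc: "op_mult N (op_mult N X Y) Z = op_mult N X (op_mult N Y Z)"
  unfolding op_mult_def apply (intro ext)
  apply (simp add: sum_distrib_left sum_distrib_right mult.assoc)
  by (rule sum.swap)

lemma op_mult_cong: "eqv N X X' \<Longrightarrow> eqv N Y Y' \<Longrightarrow> eqv N (op_mult N X Y) (op_mult N X' Y')"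
  unfolding eqv_def op_mult_def by (auto intro!: sum.cong)

lemma mult_id_left: "eqv N (op_mult N op_id X) X"
  unfolding eqv_def op_mult_def op_id_def
  by (simp add: if_distrib[of "\<lambda>x. x * _"] finite_configs cong: if_cong)

lemma mult_id_right: "eqv N (op_mult N X op_id) X"
  unfolding eqv_def op_mult_def op_id_def
  by (simp add: if_distrib[of "\<lambda>x. _ * x"] finite_configs cong: if_cong)

lemma op_prod_Nil[simp]: "op_prod N [] = op_id" by (simp add: op_prod_def)
lemma op_prod_Cons[simp]: "op_prod N (x#xs) = op_mult N x (op_prod N xs)" by (simp add: op_prod_def)

lemma prod_append: "eqv N (op_prod N (xs@ys)) (op_mult N (op_prod N xs) (op_prod N ys))"
proof (induction xs)
  case Nil then show ?case using eqv_sym[OF mult_id_left] by simp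
next
  case (Cons x xs)
  have "eqv N (op_mult N x (op_prod N (xs@ys))) (op_mult N x (op_mult N (op_prod N xs) (op_prod N ys)))"
    using Cons op_mult_cong eqv_refl by blast
  then show ?case by (simp add: op_mult_assoc)
qed

lemma prod_cong: "(\<And>x. x \<in> set xs \<Longrightarrow> eqv N (f x) (g x)) \<Longrightarrow> eqv N (op_prod N (map f xs)) (op_prod N (map g xs))"
  by (induction xs) (auto intro: op_mult_cong)

lemma prod_ids: "eqv N (op_prod N (map (\<lambda>_. op_id) xs)) op_id"
proof (induction xs)
  case (Cons x xs) then show ?case
    using op_mult_cong[OF eqv_refl Cons] mult_id_left eqv_trans by fastforce
qed simp

lemma op_scale_scale: "op_scale a (op_scale b X) = op_scale (a*b) X"
  by (auto simp: op_scale_def intro!: ext)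
lemma op_scale_1: "op_scale 1 X = X" by (auto simp: op_scale_def intro!: ext)
lemma mult_scale_left: "op_mult N (op_scale c X) Y = op_scale c (op_mult N X Y)"
  by (auto simp: op_scale_def op_mult_def sum_distrib_left mult.assoc intro!: ext)
lemma mult_scale_right: "op_mult N X (op_scale c Y) = op_scale c (op_mult N X Y)"
  by (auto simp: op_scale_def op_mult_def sum_distrib_left mult.assoc mult.left_commute intro!: ext)
lemma scale_cong: "eqv N X Y \<Longrightarrow> eqv N (op_scale c X) (op_scale c Y)"
  by (simp add: eqv_def op_scale_def)

lemma prod_scale: "op_prod N (map (\<lambda>x. op_scale c (f x)) xs) = op_scale (c ^ length xs) (op_prod N (map f xs))"
  by (induction xs) (simp_all add: op_scale_1 mult_scale_left mult_scale_right op_scale_scale mult.commute)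


definition xr :: "cfg \<Rightarrow> cfg \<Rightarrow> cfg" where "xr s d = (\<lambda>k. s k \<noteq> d k)"

lemma xr_C: "s \<in> configs N \<Longrightarrow> d \<in> configs N \<Longrightarrow> xr s d \<in> configs N"
  by (auto simp: xr_def configs_def)
lemma xr_xr[simp]: "xr (xr s d) d = s" by (auto simp: xr_def intro!: ext)
lemma upd_C: "s \<in> configs N \<Longrightarrow> q < N \<Longrightarrow> s(q := b) \<in> configs N"
  by (auto simp: configs_def)

definition loc :: "nat \<Rightarrow> nat set \<Rightarrow> op \<Rightarrow> bool" where
  "loc N S X \<longleftrightarrow>
    (\<forall>s\<in>configs N. \<forall>t\<in>configs N. X s t \<noteq> 0 \<longrightarrow> (\<forall>k. k \<notin> S \<longrightarrow> s k = t k)) \<and>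
    (\<forall>s\<in>configs N. \<forall>t\<in>configs N. \<forall>d\<in>configs N. (\<forall>k\<in>S. \<not> d k) \<longrightarrow> X (xr s d) (xr t d) = X s t)"

lemma locD1: "loc N S X \<Longrightarrow> s \<in> configs N \<Longrightarrow> t \<in> configs N \<Longrightarrow> k \<notin> S \<Longrightarrow> s k \<noteq> t k \<Longrightarrow> X s t = 0"
  unfolding loc_def by blast
lemma locD2: "loc N S X \<Longrightarrow> s \<in> configs N \<Longrightarrow> t \<in> configs N \<Longrightarrow> d \<in> configs N \<Longrightarrow> (\<And>k. k \<in> S \<Longrightarrow> \<not> d k) \<Longrightarrow> X (xr s d) (xr t d) = X s t"
  unfolding loc_def by blast

lemma loc_mono: "loc N S X \<Longrightarrow> S \<subseteq> T \<Longrightarrow> loc N T X"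
  unfolding loc_def by blast

lemma loc_eqv: "loc N S X \<Longrightarrow> eqv N X Y \<Longrightarrow> loc N S Y"
  unfolding loc_def eqv_def by (metis xr_C)

lemma loc_id: "loc N {} op_id"
  unfolding loc_def op_id_def xr_def by (auto simp: fun_eq_iff)

lemma loc_mult:
  assumes X: "loc N S X" and Y: "loc N T Y"
  shows "loc N (S \<union> T) (op_mult N X Y)"
  unfolding loc_def
proof (intro conjI ballI impI allI)
  fix s t k assume s: "s \<in> configs N" and t: "t \<in> configs N"
    and nz: "op_mult N X Y s t \<noteq> 0" and k: "k \<notin> S \<union> T"
  then obtain r where r: "r \<in> configs N" and "X s r * Y r t \<noteq> 0"
    unfolding op_mult_def by (meson sum.not_neutral_contains_not_neutral)
  then have "X s r \<noteq> 0" "Y r t \<noteq> 0" by auto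
  then show "s k = t k" using locD1[OF X s r, of k] locD1[OF Y r t, of k] k by auto
next
  fix s t d assume s: "s \<in> configs N" and t: "t \<in> configs N" and d: "d \<in> configs N"
    and dz: "\<forall>k\<in>S \<union> T. \<not> d k"
  show "op_mult N X Y (xr s d) (xr t d) = op_mult N X Y s t"
    unfolding op_mult_def
  proof (rule sum.reindex_bij_witness[where i = "\<lambda>r. xr r d" and j = "\<lambda>r. xr r d"])
    fix r assume r: "r \<in> configs N"
    show "xr (xr r d) d = r" by simp
    show "xr r d \<in> configs N" using r d by (rule xr_C)
    have rd: "xr r d \<in> configs N" using r d by (rule xr_C)
    show "X s (xr r d) * Y (xr r d) t = X (xr s d) r * Y r (xr t d)"
      using locD2[OF X s rd d] locD2[OF Y rd t d] dz by auto
  qed (use d xr_C in auto)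
qed

lemma loc_prod: "(\<And>x. x \<in> set xs \<Longrightarrow> loc N S x) \<Longrightarrow> loc N S (op_prod N xs)"
proof (induction xs)
  case Nil then show ?case using loc_mono[OF loc_id] by simp
next
  case (Cons x xs) then show ?case using loc_mult[of N S x S] by simp
qed

lemma loc_Rop: "loc N {i, j} (Rop \<gamma> i j u v)"
  unfolding loc_def Rop_def xr_def by auto

lemma loc_scale: "loc N S X \<Longrightarrow> loc N S (op_scale c X)"
  unfolding loc_def op_scale_def by auto

lemma comm:
  assumes X: "loc N S X" and Y: "loc N T Y" and disj: "S \<inter> T = {}"
    and SN: "S \<subseteq> {..<N}" and TN: "T \<subseteq> {..<N}"
  shows "eqv N (op_mult N X Y) (op_mult N Y X)"
  unfolding eqv_def
proof (intro ballI)
  fix s t assume s: "s \<in> configs N" and t: "t \<in> configs N"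
  show "op_mult N X Y s t = op_mult N Y X s t"
  proof (cases "\<forall>k. k \<notin> S \<union> T \<longrightarrow> s k = t k")
    case False
    then obtain k where "k \<notin> S \<union> T" "s k \<noteq> t k" by auto
    then show ?thesis
      using locD1[OF loc_mult[OF X Y] s t] locD1[OF loc_mult[OF Y X] s t] by (metis Un_commute)
  next
    case agree: True
    define r0 where "r0 = (\<lambda>k. if k \<in> S then t k else s k)"
    define r1 where "r1 = (\<lambda>k. if k \<in> T then t k else s k)"
    have r0C: "r0 \<in> configs N" using s t SN unfolding r0_def configs_def by auto
    have r1C: "r1 \<in> configs N" using s t TN unfolding r1_def configs_def by auto
    have e1: "op_mult N X Y s t = X s r0 * Y r0 t"
      unfolding op_mult_def
    proof (rule sum.remove[OF finite_configs r0C, THEN trans], rule trans[OF _ add_0_right],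
        rule arg_cong[where f = "\<lambda>x. _ + x"], rule sum.neutral, intro ballI)
      fix r assume r: "r \<in> configs N - {r0}"
      show "X s r * Y r t = 0"
      proof (rule ccontr)
        assume "X s r * Y r t \<noteq> 0"
        then have a: "X s r \<noteq> 0" "Y r t \<noteq> 0" by auto
        have "r = r0"
        proof
          fix k show "r k = r0 k"
            using locD1[OF X s, of r k] locD1[OF Y _ t, of r k] a r disj
            unfolding r0_def by auto
        qed
        then show False using r by auto
      qed
    qed
    have e2: "op_mult N Y X s t = Y s r1 * X r1 t"
      unfolding op_mult_def
    proof (rule sum.remove[OF finite_configs r1C, THEN trans], rule trans[OF _ add_0_right],
        rule arg_cong[where f = "\<lambda>x. _ + x"], rule sum.neutral, intro ballI)
      fix r assume r: "r \<in> configs N - {r1}"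
      show "Y s r * X r t = 0"
      proof (rule ccontr)
        assume "Y s r * X r t \<noteq> 0"
        then have a: "Y s r \<noteq> 0" "X r t \<noteq> 0" by auto
        have "r = r1"
        proof
          fix k show "r k = r1 k"
            using locD1[OF Y s, of r k] locD1[OF X _ t, of r k] a r disj
            unfolding r1_def by auto
        qed
        then show False using r by auto
      qed
    qed
    define d where "d = (\<lambda>k. k \<in> T \<and> s k \<noteq> t k)"
    define d' where "d' = (\<lambda>k. k \<in> S \<and> s k \<noteq> t k)"
    have dC: "d \<in> configs N" using TN unfolding d_def configs_def by auto
    have d'C: "d' \<in> configs N" using SN unfolding d'_def configs_def by auto
    have "X (xr s d) (xr r0 d) = X s r0"
      by (rule locD2[OF X s r0C dC]) (use disj in \<open>auto simp: d_def\<close>)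
    moreover have "xr s d = r1" unfolding xr_def d_def r1_def by auto
    moreover have "xr r0 d = t" using agree disj unfolding xr_def d_def r0_def by (auto intro!: ext)
    ultimately have x: "X r1 t = X s r0" by simp
    have "Y (xr s d') (xr r1 d') = Y s r1"
      by (rule locD2[OF Y s r1C d'C]) (use disj in \<open>auto simp: d'_def\<close>)
    moreover have "xr s d' = r0" unfolding xr_def d'_def r0_def by auto
    moreover have "xr r1 d' = t" using agree disj unfolding xr_def d'_def r1_def by (auto intro!: ext)
    ultimately have y: "Y r0 t = Y s r1" by simp
    show ?thesis using e1 e2 x y by simp
  qed
qed



declare eqv_trans[trans]
definition eps :: "bool \<Rightarrow> bool \<Rightarrow> complex" where "eps a b = (if a = b then 1 else -1)"

definition phi :: "nat \<Rightarrow> op \<Rightarrow> op" where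
  "phi q X s t = eps (s q) (t q) * X (s(q := \<not> t q)) (t(q := \<not> s q))"

lemma monoQbar_phi: "monoQbar \<gamma> L M u w m = phi (L + m) (monoQ \<gamma> L M u w m)"
  unfolding monoQbar_def phi_def block_def entry_def op_scale_def eps_def Let_def
  by (intro ext) auto

lemma phi_cong: "eqv N X Y \<Longrightarrow> q < N \<Longrightarrow> eqv N (phi q X) (phi q Y)"
  unfolding eqv_def phi_def by (simp add: upd_C)


lemma phi_id: "eqv N (phi q op_id) op_id"
  unfolding eqv_def phi_def op_id_def eps_def
proof (intro ballI)
  fix s t :: cfg
  show "(if s q = t q then 1 else - 1) * (if s(q := \<not> t q) = t(q := \<not> s q) then 1 else 0) =
        (if s = t then 1 else (0::complex))"
  proof (cases "s = t")
    case False
    then obtain k where k: "s k \<noteq> t k" by auto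
    have "(s(q := \<not> t q)) k \<noteq> (t(q := \<not> s q)) k" using k by (cases "k = q") auto
    then have "s(q := \<not> t q) \<noteq> t(q := \<not> s q)" by force
    then show ?thesis using False by simp
  qed simp
qed

lemma sh1: "sh (w - (u + \<gamma>) + \<gamma>) = - sh (u - w)"
proof -
  have e: "w - (u + \<gamma>) + \<gamma> = - (u - w)" by simp
  show ?thesis by (simp only: e sh_def sinh_minus)
qed
lemma sh2: "sh (w - (u + \<gamma>)) = - sh (u - w + \<gamma>)"
proof -
  have e: "w - (u + \<gamma>) = - (u - w + \<gamma>)" by simp
  show ?thesis by (simp only: e sh_def sinh_minus)
qed

lemma sh3: "sh (w - u) = - sh (u - w)"
  by (metis minus_diff_eq sh_def sinh_minus)

lemma Rmat_flip: "eps sq tq * Rmat \<gamma> w (u + \<gamma>) (\<not> tq) sa (\<not> sq) ta = - Rmat \<gamma> u w sa sq ta tq"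
  unfolding Rmat_def eps_def
  by (cases sq; cases tq; cases sa; cases ta) (simp_all only: sh1 sh2 sh3[of w u] simp_thms if_True if_False, simp_all)


lemma phi_Rop:
  assumes qa: "q \<noteq> a"
  shows "phi q (Rop \<gamma> q a w (u + \<gamma>)) = op_scale (-1) (Rop \<gamma> a q u w)"
proof (intro ext)
  fix s t
  have cond: "(\<forall>k. k \<noteq> q \<and> k \<noteq> a \<longrightarrow> (s(q := \<not> t q)) k = (t(q := \<not> s q)) k) = (\<forall>k. k \<noteq> a \<and> k \<noteq> q \<longrightarrow> s k = t k)"
    by (auto simp del: fun_upd_apply) (metis fun_upd_other)+
  have ua: "(s(q := \<not> t q)) a = s a" "(t(q := \<not> s q)) a = t a" using qa by auto
  show "phi q (Rop \<gamma> q a w (u + \<gamma>)) s t = op_scale (-1) (Rop \<gamma> a q u w) s t"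
    unfolding phi_def Rop_def op_scale_def cond ua fun_upd_same
    using Rmat_flip[of "s q" "t q" \<gamma> w u "s a" "t a"] by (simp; blast)
qed


lemma eps_mult: "eps a (\<not> c) * eps (\<not> c) b = eps a b"
  by (cases a; cases b; cases c) (simp_all add: eps_def)

lemma phi_mult:
  assumes X: "loc N A X" and Y: "loc N B Y" and AB: "A \<inter> B \<subseteq> {q}" and q: "q < N"
  shows "eqv N (phi q (op_mult N X Y)) (op_mult N (phi q Y) (phi q X))"
  unfolding eqv_def
proof (intro ballI)
  fix s t assume s: "s \<in> configs N" and t: "t \<in> configs N"
  define rho where "rho r = (\<lambda>k. if k = q then \<not> r q else ((t k \<noteq> r k) \<noteq> s k))" for r
  have rhoC: "rho r \<in> configs N" if "r \<in> configs N" for r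
    using that s t q by (auto simp: configs_def rho_def)
  have rr: "rho (rho r) = r" for r by (auto simp: rho_def fun_eq_iff)
  have rq: "rho r q = (\<not> r q)" for r by (simp add: rho_def)
  have rk: "k \<noteq> q \<Longrightarrow> rho r k = ((t k \<noteq> r k) \<noteq> s k)" for r k by (simp add: rho_def)
  have trm: "phi q Y s (rho r) * phi q X (rho r) t =
      eps (s q) (t q) * (X (s(q := \<not> t q)) r * Y r (t(q := \<not> s q)))" if r: "r \<in> configs N" for r
  proof -
    let ?a = "s q" and ?b = "t q" and ?c = "r q"
    have ph: "phi q Y s (rho r) * phi q X (rho r) t =
       (eps ?a (\<not> ?c) * eps (\<not> ?c) ?b) * (Y (s(q := ?c)) ((rho r)(q := \<not> ?a)) * X ((rho r)(q := \<not> ?b)) (t(q := ?c)))"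
      unfolding phi_def rq by simp
    have s1: "s(q := c) \<in> configs N" "t(q := c) \<in> configs N" for c using s t q by (auto intro: upd_C)
    have s2: "(rho r)(q := c) \<in> configs N" for c using rhoC[OF r] q by (auto intro: upd_C)
    show ?thesis
    proof (cases "(\<forall>k. k \<notin> A \<longrightarrow> k \<noteq> q \<longrightarrow> r k = s k) \<and> (\<forall>k. k \<notin> B \<longrightarrow> k \<noteq> q \<longrightarrow> r k = t k)")
      case True
      then have hA: "\<And>k. k \<notin> A \<Longrightarrow> k \<noteq> q \<Longrightarrow> r k = s k" and hB: "\<And>k. k \<notin> B \<Longrightarrow> k \<noteq> q \<Longrightarrow> r k = t k" by auto
      define d where "d = (\<lambda>k. k \<noteq> q \<and> r k \<noteq> s k)"
      define d' where "d' = (\<lambda>k. k \<noteq> q \<and> r k \<noteq> t k)"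
      have dC: "d \<in> configs N" using r s unfolding d_def configs_def by auto
      have d'C: "d' \<in> configs N" using r t unfolding d'_def configs_def by auto
      have "Y (xr (s(q := ?c)) d) (xr ((rho r)(q := \<not> ?a)) d) = Y (s(q := ?c)) ((rho r)(q := \<not> ?a))"
        by (rule locD2[OF Y s1(1) s2 dC]) (use AB hA in \<open>auto simp: d_def\<close>)
      moreover have "xr (s(q := ?c)) d = r" by (auto simp: xr_def d_def fun_eq_iff)
      moreover have "xr ((rho r)(q := \<not> ?a)) d = t(q := \<not> ?a)" by (auto simp: xr_def d_def fun_eq_iff rk)
      ultimately have ey: "Y r (t(q := \<not> ?a)) = Y (s(q := ?c)) ((rho r)(q := \<not> ?a))" by simp
      have "X (xr ((rho r)(q := \<not> ?b)) d') (xr (t(q := ?c)) d') = X ((rho r)(q := \<not> ?b)) (t(q := ?c))"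
        by (rule locD2[OF X s2 s1(2) d'C]) (use AB hB in \<open>auto simp: d'_def\<close>)
      moreover have "xr (t(q := ?c)) d' = r" by (auto simp: xr_def d'_def fun_eq_iff)
      moreover have "xr ((rho r)(q := \<not> ?b)) d' = s(q := \<not> ?b)" by (auto simp: xr_def d'_def fun_eq_iff rk)
      ultimately have ex: "X (s(q := \<not> ?b)) r = X ((rho r)(q := \<not> ?b)) (t(q := ?c))" by simp
      show ?thesis unfolding ph eps_mult ey ex by simp
    next
      case False
      then consider (nA) k where "k \<notin> A" "k \<noteq> q" "r k \<noteq> s k" | (nB) k where "k \<notin> B" "k \<noteq> q" "r k \<noteq> t k"
        by blast
      then show ?thesis
      proof cases
        case nA
        have "X (s(q := \<not> ?b)) r = 0" by (rule locD1[OF X s1(1) r nA(1)]) (use nA in auto)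
        moreover have "X ((rho r)(q := \<not> ?b)) (t(q := ?c)) = 0"
          by (rule locD1[OF X s2 s1(2) nA(1)]) (use nA in \<open>auto simp: rk\<close>)
        ultimately show ?thesis unfolding ph by simp
      next
        case nB
        have "Y r (t(q := \<not> ?a)) = 0" by (rule locD1[OF Y r s1(2) nB(1)]) (use nB in auto)
        moreover have "Y (s(q := ?c)) ((rho r)(q := \<not> ?a)) = 0"
          by (rule locD1[OF Y s1(1) s2 nB(1)]) (use nB in \<open>auto simp: rk\<close>)
        ultimately show ?thesis unfolding ph by simp
      qed
    qed
  qed
  have "phi q (op_mult N X Y) s t = (\<Sum>r\<in>configs N. eps (s q) (t q) * (X (s(q := \<not> t q)) r * Y r (t(q := \<not> s q))))"
    unfolding phi_def op_mult_def by (simp add: sum_distrib_left)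
  also have "\<dots> = (\<Sum>r\<in>configs N. phi q Y s r * phi q X r t)"
    by (rule sum.reindex_bij_witness[where i = rho and j = rho]) (auto simp: rr rhoC trm)
  finally show "phi q (op_mult N X Y) s t = op_mult N (phi q Y) (phi q X) s t"
    unfolding op_mult_def .
qed


lemma phi_prod:
  assumes "distinct ls" "q \<notin> set ls" "q < N" "\<forall>l\<in>set ls. loc N {q, l} (f l)"
  shows "eqv N (phi q (op_prod N (map f ls))) (op_prod N (rev (map (\<lambda>l. phi q (f l)) ls)))"
  using assms
proof (induction ls rule: rev_induct)
  case Nil then show ?case by (simp add: phi_id)
next
  case (snoc l ls)
  have lp: "loc N (insert q (set ls)) (op_prod N (map f ls))"
    by (rule loc_prod) (use snoc.prems in \<open>auto intro: loc_mono\<close>)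
  have lf: "loc N {q, l} (f l)" using snoc.prems by auto
  have e1: "eqv N (op_prod N (map f (ls @ [l]))) (op_mult N (op_prod N (map f ls)) (f l))"
    using prod_append[of N "map f ls" "[f l]"] op_mult_cong[OF eqv_refl mult_id_right, of N "op_prod N (map f ls)" "f l"]
    by (auto intro: eqv_trans)
  have "eqv N (phi q (op_prod N (map f (ls @ [l])))) (phi q (op_mult N (op_prod N (map f ls)) (f l)))"
    by (rule phi_cong[OF e1 \<open>q < N\<close>])
  also have "eqv N \<dots> (op_mult N (phi q (f l)) (phi q (op_prod N (map f ls))))"
    by (rule phi_mult[OF lp lf]) (use snoc.prems \<open>q < N\<close> in auto)
  also have "eqv N \<dots> (op_mult N (phi q (f l)) (op_prod N (rev (map (\<lambda>l. phi q (f l)) ls))))"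
    by (rule op_mult_cong[OF eqv_refl snoc.IH]) (use snoc.prems in auto)
  finally show ?case by simp
qed


lemma loc_prod_union: "(\<And>m. m \<in> set ms \<Longrightarrow> loc N (S m) (f m)) \<Longrightarrow> loc N (\<Union>m\<in>set ms. S m) (op_prod N (map f ms))"
  by (rule loc_prod) (auto intro: loc_mono)

lemma interchange:
  assumes "distinct is"
    "\<forall>i\<in>set is. loc N (SX i) (X i) \<and> loc N (SY i) (Y i) \<and> SX i \<subseteq> {..<N} \<and> SY i \<subseteq> {..<N}"
    "\<forall>i\<in>set is. \<forall>j\<in>set is. i \<noteq> j \<longrightarrow> SX j \<inter> SY i = {}"
  shows "eqv N (op_prod N (map (\<lambda>i. op_mult N (X i) (Y i)) is))
           (op_mult N (op_prod N (map X is)) (op_prod N (map Y is)))"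
  using assms
proof (induction "is")
  case Nil then show ?case using eqv_sym[OF mult_id_left] by simp
next
  case (Cons i "is")
  let ?PX = "op_prod N (map X is)" and ?PY = "op_prod N (map Y is)"
  have lPX: "loc N (\<Union>j\<in>set is. SX j) ?PX"
    by (rule loc_prod) (use Cons.prems in \<open>auto intro: loc_mono\<close>)
  have cm: "eqv N (op_mult N (Y i) ?PX) (op_mult N ?PX (Y i))"
    by (rule comm) (use Cons.prems lPX in auto)
  have "eqv N (op_prod N (map (\<lambda>i. op_mult N (X i) (Y i)) (i # is)))
        (op_mult N (op_mult N (X i) (Y i)) (op_mult N ?PX ?PY))"
    using Cons by (auto intro: op_mult_cong)
  also have "op_mult N (op_mult N (X i) (Y i)) (op_mult N ?PX ?PY) = op_mult N (X i) (op_mult N (op_mult N (Y i) ?PX) ?PY)"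
    by (simp add: op_mult_assoc)
  also have "eqv N \<dots> (op_mult N (X i) (op_mult N (op_mult N ?PX (Y i)) ?PY))"
    by (intro op_mult_cong cm eqv_refl)
  also have "op_mult N (X i) (op_mult N (op_mult N ?PX (Y i)) ?PY) = op_mult N (op_prod N (map X (i # is))) (op_prod N (map Y (i # is)))"
    by (simp add: op_mult_assoc)
  finally show ?case .
qed

lemma grid:
  assumes "distinct ls" "distinct ms"
    "\<forall>l\<in>set ls. \<forall>m\<in>set ms. loc N (sg l m) (g l m) \<and> sg l m \<subseteq> {..<N}"
    "\<forall>l\<in>set ls. \<forall>l'\<in>set ls. \<forall>m\<in>set ms. \<forall>m'\<in>set ms. l \<noteq> l' \<longrightarrow> m \<noteq> m' \<longrightarrow> sg l m \<inter> sg l' m' = {}"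
  shows "eqv N (op_prod N (map (\<lambda>l. op_prod N (map (g l) ms)) ls))
               (op_prod N (map (\<lambda>m. op_prod N (map (\<lambda>l. g l m) ls)) ms))"
  using assms
proof (induction ms)
  case Nil then show ?case using prod_ids by simp
next
  case (Cons m ms)
  have "eqv N (op_prod N (map (\<lambda>l. op_prod N (map (g l) (m # ms))) ls))
     (op_mult N (op_prod N (map (\<lambda>l. g l m) ls)) (op_prod N (map (\<lambda>l. op_prod N (map (g l) ms)) ls)))"
    unfolding list.map op_prod_Cons
  proof (rule interchange[where SX = "\<lambda>l. sg l m" and SY = "\<lambda>l. \<Union>m'\<in>set ms. sg l m'"])
    show "distinct ls" by fact
    show "\<forall>i\<in>set ls. loc N (sg i m) (g i m) \<and> loc N (\<Union>m'\<in>set ms. sg i m') (op_prod N (map (g i) ms)) \<and>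
        sg i m \<subseteq> {..<N} \<and> (\<Union>m'\<in>set ms. sg i m') \<subseteq> {..<N}"
      using Cons.prems by (auto intro!: loc_prod_union)
    show "\<forall>i\<in>set ls. \<forall>j\<in>set ls. i \<noteq> j \<longrightarrow> sg j m \<inter> (\<Union>m'\<in>set ms. sg i m') = {}"
      using Cons.prems by fastforce
  qed
  also have "eqv N \<dots> (op_mult N (op_prod N (map (\<lambda>l. g l m) ls)) (op_prod N (map (\<lambda>m. op_prod N (map (\<lambda>l. g l m) ls)) ms)))"
    by (rule op_mult_cong[OF eqv_refl Cons.IH]) (use Cons.prems in auto)
  finally show ?case by simp
qed


theorem lemma4:
  fixes \<gamma> :: complex and L M :: nat and u w :: "nat \<Rightarrow> complex"
  assumes "L \<ge> 1" and "M \<ge> 1"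
  shows "\<forall>s\<in>configs (L + M). \<forall>t\<in>configs (L + M).
           bigT \<gamma> L M u w s t =
           op_scale ((-1) ^ (L * M))
             (op_prod (L + M) (map (monoQbar \<gamma> L M u w) [0..<M])) s t"
proof -
  define N where "N = L + M"
  define g where "g = (\<lambda>l m. Rop \<gamma> l (L + m) (u l) (w m))"
  define Z where "Z = op_prod N (map (\<lambda>m. op_prod N (map (\<lambda>l. g l m) (rev [0..<L]))) [0..<M])"
  have bT: "bigT \<gamma> L M u w = op_prod N (map (\<lambda>l. op_prod N (map (g l) [0..<M])) (rev [0..<L]))"
    unfolding bigT_def rev_map N_def
    by (intro arg_cong[where f = "op_prod (L + M)"] map_cong) (simp_all add: monoA_def g_def)
  have e1: "eqv N (bigT \<gamma> L M u w) Z"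
    unfolding bT Z_def
    by (rule grid[where sg = "\<lambda>l m. {l, L + m}"]) (auto simp: g_def loc_Rop N_def)
  have e2: "eqv N (monoQbar \<gamma> L M u w m) (op_scale ((-1) ^ L) (op_prod N (map (\<lambda>l. g l m) (rev [0..<L]))))"
    if m: "m \<in> set [0..<M]" for m
  proof -
    have "eqv N (monoQbar \<gamma> L M u w m)
       (op_prod N (rev (map (\<lambda>l. phi (L + m) (Rop \<gamma> (L + m) l (w m) (u l + \<gamma>))) [0..<L])))"
      unfolding monoQbar_phi monoQ_def N_def
      by (rule phi_prod) (use m in \<open>auto simp: loc_Rop\<close>)
    also have "rev (map (\<lambda>l. phi (L + m) (Rop \<gamma> (L + m) l (w m) (u l + \<gamma>))) [0..<L])
        = map (\<lambda>l. op_scale (-1) (g l m)) (rev [0..<L])"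
      by (auto simp: rev_map g_def phi_Rop)
    also have "op_prod N (map (\<lambda>l. op_scale (-1) (g l m)) (rev [0..<L])) =
        op_scale ((-1) ^ L) (op_prod N (map (\<lambda>l. g l m) (rev [0..<L])))"
      by (simp add: prod_scale)
    finally show ?thesis .
  qed
  have e3: "eqv N (op_prod N (map (monoQbar \<gamma> L M u w) [0..<M])) (op_scale (((-1) ^ L) ^ M) Z)"
    using prod_cong[of "[0..<M]" N "monoQbar \<gamma> L M u w", OF e2]
    unfolding Z_def prod_scale by simp
  show ?thesis
  proof (intro ballI)
    fix s t assume s: "s \<in> configs (L + M)" and t: "t \<in> configs (L + M)"
    have "op_scale ((-1) ^ (L * M)) (op_prod (L + M) (map (monoQbar \<gamma> L M u w) [0..<M])) s t
        = (-1) ^ (L * M) * (((-1) ^ L) ^ M * Z s t)"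
      using e3 s t unfolding eqv_def op_scale_def N_def by simp
    also have "\<dots> = ((-1::complex) ^ (L * M) * (-1) ^ (L * M)) * Z s t"
      by (simp add: power_mult)
    also have "\<dots> = Z s t" by (simp add: power_mult_distrib[symmetric])
    also have "\<dots> = bigT \<gamma> L M u w s t" using e1 s t unfolding eqv_def N_def by simp
    finally show "bigT \<gamma> L M u w s t = op_scale ((-1) ^ (L * M)) (op_prod (L + M) (map (monoQbar \<gamma> L M u w) [0..<M])) s t"
      by simp
  qed
qed

end
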